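(* Let $c\in\mathbb{C}$ and let $\mathbf{u},\widehat{\mathbf{u}}$ be quasi-definite linear functionals with $\mathbf{u}=(x-c)^2\widehat{\mathbf{u}}$, SMOPs $(P_n)$ and $(Q_n)$, and monic Jacobi matrices $J$ and $\widehat J$. Write $Q_n=P_n+\alpha_{n,n-1}P_{n-1}+\alpha_{n,n-2}P_{n-2}$ ($n\ge1$, with $P_{-1}=0$) and $(x-c)^2P_n=Q_{n+2}+\beta_{n,n+1}Q_{n+1}+\beta_{n,n}Q_n$ ($n\ge0$). Then $W(Q_{n+1},Q_n)(c)\ne0$ for all $n\ge0$, $$\beta_{n,n}=\frac{W(Q_{n+1},Q_{n+2})(c)}{W(Q_n,Q_{n+1})(c)}\neq0,\qquad \beta_{n,n+1}=-\frac{W(Q_n,Q_{n+2})(c)}{W(Q_n,Q_{n+1})(c)},$$ and, with $L$ the semi-infinite lower triangular matrix with $L_{n,n}=1$, $L_{n,n-1}=\alpha_{n,n-1}$, $L_{n,n-2}=\alpha_{n,n-2}$ and all other entries $0$, and $U$ the semi-infinite upper triangular matrix with $U_{n,n}=\beta_{n,n}$, $U_{n,n+1}=\beta_{n,n+1}$, $U_{n,n+2}=1$ and all other entries $0$, $$(J-cI)^2=UL,\qquad (\widehat J-cI)^2=LU.$$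
   Context: Quasi-definite functional: all leading principal submatrices of the Hankel moment matrix are nonsingular; it has a unique sequence of monic orthogonal polynomials (SMOP) $(P_n)$ with $xP_n=P_{n+1}+b_nP_n+a_nP_{n-1}$, $P_{-1}=0$, $P_0=1$, $a_n\ne0$. The monic Jacobi matrix is the semi-infinite tridiagonal matrix with diagonal $(b_0,b_1,\dots)$, superdiagonal entries $1$ and subdiagonal $(a_1,a_2,\dots)$, so that $x\mathbf{P}=J\mathbf{P}$ for $\mathbf{P}=(P_0,P_1,\dots)^\top$. $\langle(x-c)^2\widehat{\mathbf{u}},p\rangle=\langle\widehat{\mathbf{u}},(x-c)^2p\rangle$. Wronskian: $W(p,q)(x)=p(x)q'(x)-p'(x)q(x)$. *)

theory Defs
  imports "HOL-Computational_Algebra.Polynomial" "Jordan_Normal_Form.Determinant"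
begin

definition lin_functional :: "(complex poly \<Rightarrow> complex) \<Rightarrow> bool" where
  "lin_functional u \<longleftrightarrow> (\<forall>p q. u (p + q) = u p + u q) \<and> (\<forall>a p. u (smult a p) = a * u p)"

definition quasi_definite :: "(complex poly \<Rightarrow> complex) \<Rightarrow> bool" where
  "quasi_definite u \<longleftrightarrow> lin_functional u \<and>
     (\<forall>n. det (mat (Suc n) (Suc n) (\<lambda>(i, j). u (monom 1 (i + j)))) \<noteq> 0)"

definition mult_sq :: "complex \<Rightarrow> (complex poly \<Rightarrow> complex) \<Rightarrow> (complex poly \<Rightarrow> complex)" where
  "mult_sq c u = (\<lambda>p. u ([:-c, 1:]^2 * p))"

definition is_SMOP :: "(complex poly \<Rightarrow> complex) \<Rightarrow> (nat \<Rightarrow> complex poly) \<Rightarrow> bool" where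
  "is_SMOP u P \<longleftrightarrow> (\<forall>n. degree (P n) = n \<and> lead_coeff (P n) = 1) \<and>
     (\<forall>m n. m \<noteq> n \<longrightarrow> u (P m * P n) = 0) \<and> (\<forall>n. u (P n * P n) \<noteq> 0)"

definition three_term :: "(nat \<Rightarrow> complex poly) \<Rightarrow> (nat \<Rightarrow> complex) \<Rightarrow> (nat \<Rightarrow> complex) \<Rightarrow> bool" where
  "three_term P a b \<longleftrightarrow> (\<forall>n. [:0, 1:] * P n =
      P (Suc n) + smult (b n) (P n) + (if n = 0 then 0 else smult (a n) (P (n - 1))))"

text \<open>Semi-infinite matrices are functions nat => nat => complex (row, column).\<close>
type_synonym imat = "nat \<Rightarrow> nat \<Rightarrow> complex"

definition monic_jacobi :: "(nat \<Rightarrow> complex) \<Rightarrow> (nat \<Rightarrow> complex) \<Rightarrow> imat" where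
  "monic_jacobi a b = (\<lambda>i j. if j = i then b i else if j = Suc i then 1
       else if i = Suc j then a i else 0)"

definition imat_id :: imat where "imat_id = (\<lambda>i j. if i = j then 1 else 0)"

definition imat_minus :: "imat \<Rightarrow> imat \<Rightarrow> imat" where
  "imat_minus A B = (\<lambda>i j. A i j - B i j)"

definition imat_smult :: "complex \<Rightarrow> imat \<Rightarrow> imat" where
  "imat_smult c A = (\<lambda>i j. c * A i j)"

text \<open>Product of semi-infinite matrices, for row-finite left factor (all matrices here are banded).\<close>
definition imat_mult :: "imat \<Rightarrow> imat \<Rightarrow> imat" where
  "imat_mult A B = (\<lambda>i j. \<Sum>k\<in>{k. A i k \<noteq> 0}. A i k * B k j)"

definition wronskian :: "complex poly \<Rightarrow> complex poly \<Rightarrow> complex \<Rightarrow> complex" where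
  "wronskian p q x = poly p x * poly (pderiv q) x - poly (pderiv p) x * poly q x"

end

theory Submission
  imports Defs
begin


lemma smult_sum_right: "smult c (sum f A) = (\<Sum>x\<in>A. smult c (f x))"
  by (induct A rule: infinite_finite_induct) (auto simp: smult_add_right)

lemma lin_zero: "lin_functional u \<Longrightarrow> u 0 = 0"
  unfolding lin_functional_def by (metis add.right_neutral add_cancel_right_right)

lemma lin_sum: "lin_functional u \<Longrightarrow> u (sum f A) = (\<Sum>x\<in>A. u (f x))"
  by (induct A rule: infinite_finite_induct) (auto simp: lin_zero, auto simp: lin_functional_def)

lemma lin_smult: "lin_functional u \<Longrightarrow> u (smult a p) = a * u p"
  unfolding lin_functional_def by auto

lemma lin_add: "lin_functional u \<Longrightarrow> u (p + q) = u p + u q"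
  unfolding lin_functional_def by auto

lemma smop_P0: "is_SMOP u P \<Longrightarrow> P 0 = 1"
  unfolding is_SMOP_def by (metis degree_0_id lead_coeff_1 degree_1 one_pCons pCons_0_0 lead_coeff_pCons(1) zero_neq_one)

lemma smop_deg: "is_SMOP u P \<Longrightarrow> degree (P n) = n"
  unfolding is_SMOP_def by blast

lemma smop_lc: "is_SMOP u P \<Longrightarrow> coeff (P n) n = 1"
  unfolding is_SMOP_def by (metis)

lemma sum_extend:
  fixes K M :: nat
  assumes "K \<le> M" "\<And>j. K \<le> j \<Longrightarrow> j < M \<Longrightarrow> f j = 0"
  shows "sum f {..<M} = sum f {..<K}"
proof (rule sum.mono_neutral_right)
  show "\<forall>i\<in>{..<M} - {..<K}. f i = 0"
  proof
    fix i assume "i \<in> {..<M} - {..<K}"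
    then have "K \<le> i" "i < M" by auto
    then show "f i = 0" by (rule assms(2))
  qed
qed (use assms in auto)

lemma imat_mult_S:
  assumes "finite S" "{k. A i k \<noteq> 0} \<subseteq> S"
  shows "imat_mult A B i j = (\<Sum>k\<in>S. A i k * B k j)"
  unfolding imat_mult_def using assms by (intro sum.mono_neutral_left) auto

lemma double_sum:
  "(\<Sum>k<M. smult (A k) (\<Sum>j<N. smult (B k j) (R j))) = (\<Sum>j<N. smult (\<Sum>k<M. A k * B k j) (R j))"
  by (simp add: smult_sum_right smult_sum sum.swap[of _ "{..<M}"])

lemma smop_expand:
  assumes "is_SMOP u P"
  shows "degree p \<le> n \<Longrightarrow> \<exists>f. p = (\<Sum>j<Suc n. smult (f j) (P j))"
proof (induct n arbitrary: p)
  case 0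
  then have "degree p = 0" by simp
  then have "p = [:coeff p 0:]" by (metis degree_0_id)
  then have "p = smult (coeff p 0) (P 0)" using smop_P0[OF assms] by (metis mult.right_neutral one_pCons smult_pCons smult_0_right)
  then show ?case by auto
next
  case (Suc n)
  define q where "q = p - smult (coeff p (Suc n)) (P (Suc n))"
  have dP: "degree (P (Suc n)) = Suc n" "coeff (P (Suc n)) (Suc n) = 1" using smop_deg[OF assms] smop_lc[OF assms] by auto
  have "\<forall>i>n. coeff q i = 0"
  proof (intro allI impI)
    fix i assume "i > n"
    show "coeff q i = 0"
    proof (cases "i = Suc n")
      case True then show ?thesis using dP by (simp add: q_def)
    next
      case False
      then have "i > Suc n" using \<open>i > n\<close> by auto
      then show ?thesis using dP Suc.prems by (simp add: q_def coeff_eq_0)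
    qed
  qed
  then have "degree q \<le> n" by (rule degree_le)
  then obtain f where f: "q = (\<Sum>j<Suc n. smult (f j) (P j))" using Suc.hyps by blast
  define g where "g = f(Suc n := coeff p (Suc n))"
  have "p = q + smult (coeff p (Suc n)) (P (Suc n))" by (simp add: q_def)
  also have "\<dots> = (\<Sum>j<Suc (Suc n). smult (g j) (P j))"
    using f by (simp add: g_def)
  finally show ?case by blast
qed

lemma smop_orth:
  assumes "lin_functional u" "is_SMOP u P" "degree p < m"
  shows "u (P m * p) = 0"
proof -
  obtain f where f: "p = (\<Sum>j<Suc (degree p). smult (f j) (P j))"
    using smop_expand[OF assms(2)] by blast
  have "u (P m * p) = (\<Sum>j<Suc (degree p). f j * u (P m * P j))"
    by (subst f) (simp only: sum_distrib_left mult_smult_right lin_sum[OF assms(1)] lin_smult[OF assms(1)])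
  also have "\<dots> = 0"
    using assms(2,3) unfolding is_SMOP_def by (intro sum.neutral) auto
  finally show ?thesis .
qed

lemma smop_eval:
  assumes "lin_functional u" "is_SMOP u P" "m < N"
  shows "u ((\<Sum>j<N. smult (f j) (P j)) * P m) = f m * u (P m * P m)"
proof -
  have "u ((\<Sum>j<N. smult (f j) (P j)) * P m) = (\<Sum>j<N. f j * u (P j * P m))"
    by (simp add: sum_distrib_right lin_sum[OF assms(1)] lin_smult[OF assms(1)])
  also have "\<dots> = (\<Sum>j<N. if j = m then f m * u (P m * P m) else 0)"
    using assms(2) unfolding is_SMOP_def by (intro sum.cong) auto
  also have "\<dots> = f m * u (P m * P m)" using assms(3) by simp
  finally show ?thesis .
qed

lemma smop_unique:
  assumes "lin_functional u" "is_SMOP u P" "m < N"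
    and "(\<Sum>j<N. smult (A j) (P j)) = (\<Sum>j<N. smult (B j) (P j))"
  shows "A m = B m"
proof -
  have "A m * u (P m * P m) = B m * u (P m * P m)"
    using smop_eval[OF assms(1-3), of A] smop_eval[OF assms(1-3), of B] assms(4) by metis
  moreover have "u (P m * P m) \<noteq> 0" using assms(2) unfolding is_SMOP_def by auto
  ultimately show ?thesis by simp
qed

lemma smop_zero:
  assumes "lin_functional u" "is_SMOP u P" "r \<noteq> 0" "u (r * P (degree r)) = 0"
  shows False
proof -
  define d where "d = degree r"
  define q where "q = r - smult (lead_coeff r) (P d)"
  have dP: "degree (P d) = d" "coeff (P d) d = 1" using smop_deg[OF assms(2)] smop_lc[OF assms(2)] by auto
  have cq: "coeff q d = 0" using dP by (simp add: q_def d_def)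
  have "degree q \<le> d"
    unfolding q_def d_def by (metis degree_diff_le degree_smult_le dP(1) d_def le_refl order_trans)
  then have "q = 0 \<or> degree q < d" using cq by (metis le_neq_implies_less leading_coeff_0_iff)
  then have uq: "u (P d * q) = 0"
    using smop_orth[OF assms(1,2)] lin_zero[OF assms(1)] by auto
  have "r = q + smult (lead_coeff r) (P d)" by (simp add: q_def d_def)
  then have "u (r * P d) = u (P d * q) + lead_coeff r * u (P d * P d)"
    by (metis lin_add[OF assms(1)] lin_smult[OF assms(1)] distrib_right mult.commute mult_smult_left)
  then have "lead_coeff r * u (P d * P d) = 0" using uq assms(4) d_def by simp
  moreover have "u (P d * P d) \<noteq> 0" using assms(2) unfolding is_SMOP_def by auto
  ultimately show False using assms(3) by simp
qed

definition Jm :: "(nat \<Rightarrow> complex) \<Rightarrow> (nat \<Rightarrow> complex) \<Rightarrow> complex \<Rightarrow> imat" where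
  "Jm a b c = imat_minus (monic_jacobi a b) (imat_smult c imat_id)"

lemma Jm_eq: "Jm a b c i j = (if j = i then b i - c else if j = Suc i then 1 else if i = Suc j then a i else 0)"
  unfolding Jm_def imat_minus_def monic_jacobi_def imat_smult_def imat_id_def by auto

lemma lin_shift: "[:-c, 1:] * (p::complex poly) = [:0, 1:] * p - smult c p"
proof -
  have "[:-c, 1:] = [:0, 1:] - [:c:]" by simp
  then show ?thesis by (simp add: left_diff_distrib)
qed

lemma jac_row:
  assumes "three_term P a b"
  shows "[:-c, 1:] * P k = (\<Sum>j<k+2. smult (Jm a b c k j) (P j))"
proof -
  have T: "\<And>n. [:0, 1:] * P n = P (Suc n) + smult (b n) (P n) + (if n = 0 then 0 else smult (a n) (P (n - 1)))"
    using assms unfolding three_term_def by blast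
  show ?thesis
proof (cases k)
  case 0
  have "[:0, 1:] * P 0 = P 1 + smult (b 0) (P 0)" using T[of 0] by simp
  moreover have "(\<Sum>j<0+2. smult (Jm a b c 0 j) (P j)) = smult (b 0 - c) (P 0) + P 1"
    by (simp add: numeral_2_eq_2 Jm_eq)
  ultimately show ?thesis using 0 lin_shift[of c "P 0"] by (simp add: smult_diff_left algebra_simps)
next
  case (Suc m)
  have t: "[:0, 1:] * P (Suc m) = P (Suc (Suc m)) + smult (b (Suc m)) (P (Suc m)) + smult (a (Suc m)) (P m)"
    using T[of "Suc m"] by simp
  have z: "(\<Sum>j<m. smult (Jm a b c (Suc m) j) (P j)) = 0"
    by (intro sum.neutral) (auto simp: Jm_eq)
  have "(\<Sum>j<k+2. smult (Jm a b c k j) (P j)) = (\<Sum>j<m. smult (Jm a b c (Suc m) j) (P j))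
      + smult (Jm a b c (Suc m) m) (P m) + smult (Jm a b c (Suc m) (Suc m)) (P (Suc m))
      + smult (Jm a b c (Suc m) (Suc (Suc m))) (P (Suc (Suc m)))"
    using Suc by (simp add: numeral_2_eq_2)
  also have "\<dots> = smult (a (Suc m)) (P m) + smult (b (Suc m) - c) (P (Suc m)) + P (Suc (Suc m))"
    using z by (simp add: Jm_eq)
  also have "\<dots> = [:-c, 1:] * P k" using t Suc lin_shift[of c "P (Suc m)"] by (simp add: smult_diff_left algebra_simps)
  finally show ?thesis by simp
qed
qed

lemma jac_row_ext:
  assumes "three_term P a b" "k + 2 \<le> M"
  shows "[:-c, 1:] * P k = (\<Sum>j<M. smult (Jm a b c k j) (P j))"
proof -
  have "(\<Sum>j<M. smult (Jm a b c k j) (P j)) = (\<Sum>j<k+2. smult (Jm a b c k j) (P j))"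
    using assms(2) by (intro sum_extend) (auto simp: Jm_eq)
  then show ?thesis using jac_row[OF assms(1)] by simp
qed

lemma jac_sq:
  assumes "three_term P a b"
  shows "[:-c, 1:]^2 * P i = (\<Sum>j<i+4. smult (imat_mult (Jm a b c) (Jm a b c) i j) (P j))"
proof -
  have "[:-c, 1:]^2 * P i = [:-c, 1:] * ([:-c, 1:] * P i)" by (simp only: power2_eq_square mult.assoc)
  also have "\<dots> = [:-c, 1:] * (\<Sum>k<i+2. smult (Jm a b c i k) (P k))"
    using jac_row[OF assms] by simp
  also have "\<dots> = (\<Sum>k<i+2. smult (Jm a b c i k) ([:-c, 1:] * P k))"
    by (simp only: sum_distrib_left mult_smult_right)
  also have "\<dots> = (\<Sum>k<i+2. smult (Jm a b c i k) (\<Sum>j<i+4. smult (Jm a b c k j) (P j)))"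
  proof (rule sum.cong[OF refl])
    fix k assume "k \<in> {..<i+2}"
    then have "[:-c, 1:] * P k = (\<Sum>j<i+4. smult (Jm a b c k j) (P j))"
      by (intro jac_row_ext[OF assms]) auto
    then show "smult (Jm a b c i k) ([:-c, 1:] * P k) = smult (Jm a b c i k) (\<Sum>j<i+4. smult (Jm a b c k j) (P j))"
      by simp
  qed
  also have "\<dots> = (\<Sum>j<i+4. smult (\<Sum>k<i+2. Jm a b c i k * Jm a b c k j) (P j))"
    by (rule double_sum)
  also have "\<dots> = (\<Sum>j<i+4. smult (imat_mult (Jm a b c) (Jm a b c) i j) (P j))"
  proof (rule sum.cong[OF refl])
    fix j
    have "imat_mult (Jm a b c) (Jm a b c) i j = (\<Sum>k<i+2. Jm a b c i k * Jm a b c k j)"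
      by (rule imat_mult_S) (auto simp: Jm_eq)
    then show "smult (\<Sum>k<i+2. Jm a b c i k * Jm a b c k j) (P j) = smult (imat_mult (Jm a b c) (Jm a b c) i j) (P j)" by simp
  qed
  finally show ?thesis .
qed

lemma jac_sq_far:
  assumes "i + 4 \<le> j"
  shows "imat_mult (Jm a b c) (Jm a b c) i j = 0"
proof -
  have "imat_mult (Jm a b c) (Jm a b c) i j = (\<Sum>k<i+2. Jm a b c i k * Jm a b c k j)"
    by (intro imat_mult_S) (auto simp: Jm_eq)
  also have "\<dots> = 0" using assms by (intro sum.neutral) (auto simp: Jm_eq)
  finally show ?thesis .
qed

definition Lm :: "(nat \<Rightarrow> complex) \<Rightarrow> (nat \<Rightarrow> complex) \<Rightarrow> imat" where
  "Lm alpha1 alpha2 = (\<lambda>i j. if j = i then 1 else if Suc j = i then alpha1 i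
                   else if j + 2 = i then alpha2 i else 0)"

definition Um :: "(nat \<Rightarrow> complex) \<Rightarrow> (nat \<Rightarrow> complex) \<Rightarrow> imat" where
  "Um beta0 beta1 = (\<lambda>i j. if j = i then beta0 i else if j = Suc i then beta1 i
                   else if j = i + 2 then 1 else 0)"

lemma Q_row:
  assumes Q_exp: "\<forall>n\<ge>1. Q n = P n + smult (alpha1 n) (P (n - 1))
                      + (if n \<ge> 2 then smult (alpha2 n) (P (n - 2)) else 0)"
    and Q0: "Q 0 = P 0"
  shows "Q k = (\<Sum>j<k+1. smult (Lm alpha1 alpha2 k j) (P j))"
proof (cases k)
  case 0 then show ?thesis using Q0 by (simp add: Lm_def)
next
  case (Suc m)
  show ?thesis
  proof (cases m)
    case 0
    then show ?thesis using Suc Q_exp by (simp add: Lm_def)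
  next
    case (Suc l)
    have z: "(\<Sum>j<l. smult (Lm alpha1 alpha2 k j) (P j)) = 0"
      using Suc \<open>k = Suc m\<close> by (intro sum.neutral) (auto simp: Lm_def)
    have "Q k = P k + smult (alpha1 k) (P (Suc l)) + smult (alpha2 k) (P l)"
      using Q_exp Suc \<open>k = Suc m\<close> by auto
    then show ?thesis using z Suc \<open>k = Suc m\<close> by (simp add: Lm_def algebra_simps)
  qed
qed

lemma Q_row_ext:
  assumes Q_exp: "\<forall>n\<ge>1. Q n = P n + smult (alpha1 n) (P (n - 1))
                      + (if n \<ge> 2 then smult (alpha2 n) (P (n - 2)) else 0)"
    and Q0: "Q 0 = P 0" and "k + 1 \<le> M"
  shows "Q k = (\<Sum>j<M. smult (Lm alpha1 alpha2 k j) (P j))"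
proof -
  have "(\<Sum>j<M. smult (Lm alpha1 alpha2 k j) (P j)) = (\<Sum>j<k+1. smult (Lm alpha1 alpha2 k j) (P j))"
    using assms(3) by (intro sum_extend) (auto simp: Lm_def)
  then show ?thesis using Q_row[OF Q_exp Q0] by simp
qed

lemma P_row:
  assumes P_exp: "\<forall>n. [:-c, 1:]^2 * P n = Q (n + 2) + smult (beta1 n) (Q (n + 1)) + smult (beta0 n) (Q n)"
  shows "[:-c, 1:]^2 * P i = (\<Sum>k<i+3. smult (Um beta0 beta1 i k) (Q k))"
proof -
  have z: "(\<Sum>k<i. smult (Um beta0 beta1 i k) (Q k)) = 0"
    by (intro sum.neutral) (auto simp: Um_def)
  have e: "i + 3 = Suc (Suc (Suc i))" by simp
  show ?thesis using P_exp z unfolding e by (simp add: Um_def algebra_simps)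
qed

lemma P_row_ext:
  assumes P_exp: "\<forall>n. [:-c, 1:]^2 * P n = Q (n + 2) + smult (beta1 n) (Q (n + 1)) + smult (beta0 n) (Q n)"
    and "i + 3 \<le> M"
  shows "[:-c, 1:]^2 * P i = (\<Sum>k<M. smult (Um beta0 beta1 i k) (Q k))"
proof -
  have "(\<Sum>k<M. smult (Um beta0 beta1 i k) (Q k)) = (\<Sum>k<i+3. smult (Um beta0 beta1 i k) (Q k))"
    using assms(2) by (intro sum_extend) (auto simp: Um_def)
  then show ?thesis using P_row[OF P_exp] by simp
qed

lemma UL_row:
  assumes Q_exp: "\<forall>n\<ge>1. Q n = P n + smult (alpha1 n) (P (n - 1))
                      + (if n \<ge> 2 then smult (alpha2 n) (P (n - 2)) else 0)"
    and Q0: "Q 0 = P 0"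
    and P_exp: "\<forall>n. [:-c, 1:]^2 * P n = Q (n + 2) + smult (beta1 n) (Q (n + 1)) + smult (beta0 n) (Q n)"
  shows "[:-c, 1:]^2 * P i = (\<Sum>j<i+4. smult (imat_mult (Um beta0 beta1) (Lm alpha1 alpha2) i j) (P j))"
proof -
  have "[:-c, 1:]^2 * P i = (\<Sum>k<i+3. smult (Um beta0 beta1 i k) (Q k))"
    by (rule P_row[OF P_exp])
  also have "\<dots> = (\<Sum>k<i+3. smult (Um beta0 beta1 i k) (\<Sum>j<i+4. smult (Lm alpha1 alpha2 k j) (P j)))"
  proof (rule sum.cong[OF refl])
    fix k assume "k \<in> {..<i+3}"
    then have "Q k = (\<Sum>j<i+4. smult (Lm alpha1 alpha2 k j) (P j))"
      by (intro Q_row_ext[OF Q_exp Q0]) auto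
    then show "smult (Um beta0 beta1 i k) (Q k) = smult (Um beta0 beta1 i k) (\<Sum>j<i+4. smult (Lm alpha1 alpha2 k j) (P j))"
      by simp
  qed
  also have "\<dots> = (\<Sum>j<i+4. smult (\<Sum>k<i+3. Um beta0 beta1 i k * Lm alpha1 alpha2 k j) (P j))"
    by (rule double_sum)
  also have "\<dots> = (\<Sum>j<i+4. smult (imat_mult (Um beta0 beta1) (Lm alpha1 alpha2) i j) (P j))"
  proof (rule sum.cong[OF refl])
    fix j
    have "imat_mult (Um beta0 beta1) (Lm alpha1 alpha2) i j = (\<Sum>k<i+3. Um beta0 beta1 i k * Lm alpha1 alpha2 k j)"
      by (rule imat_mult_S) (auto simp: Um_def)
    then show "smult (\<Sum>k<i+3. Um beta0 beta1 i k * Lm alpha1 alpha2 k j) (P j) = smult (imat_mult (Um beta0 beta1) (Lm alpha1 alpha2) i j) (P j)" by simp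
  qed
  finally show ?thesis .
qed

lemma UL_far:
  assumes "i + 4 \<le> j"
  shows "imat_mult (Um beta0 beta1) (Lm alpha1 alpha2) i j = 0"
proof -
  have "imat_mult (Um beta0 beta1) (Lm alpha1 alpha2) i j = (\<Sum>k<i+3. Um beta0 beta1 i k * Lm alpha1 alpha2 k j)"
    by (rule imat_mult_S) (auto simp: Um_def)
  also have "\<dots> = 0" using assms by (intro sum.neutral) (auto simp: Lm_def)
  finally show ?thesis .
qed

lemma LU_row:
  assumes Q_exp: "\<forall>n\<ge>1. Q n = P n + smult (alpha1 n) (P (n - 1))
                      + (if n \<ge> 2 then smult (alpha2 n) (P (n - 2)) else 0)"
    and Q0: "Q 0 = P 0"
    and P_exp: "\<forall>n. [:-c, 1:]^2 * P n = Q (n + 2) + smult (beta1 n) (Q (n + 1)) + smult (beta0 n) (Q n)"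
  shows "[:-c, 1:]^2 * Q i = (\<Sum>j<i+4. smult (imat_mult (Lm alpha1 alpha2) (Um beta0 beta1) i j) (Q j))"
proof -
  have "[:-c, 1:]^2 * Q i = [:-c, 1:]^2 * (\<Sum>k<i+1. smult (Lm alpha1 alpha2 i k) (P k))"
    using Q_row[OF Q_exp Q0] by metis
  also have "\<dots> = (\<Sum>k<i+1. smult (Lm alpha1 alpha2 i k) ([:-c, 1:]^2 * P k))"
    by (simp only: sum_distrib_left mult_smult_right)
  also have "\<dots> = (\<Sum>k<i+1. smult (Lm alpha1 alpha2 i k) (\<Sum>j<i+4. smult (Um beta0 beta1 k j) (Q j)))"
  proof (rule sum.cong[OF refl])
    fix k assume "k \<in> {..<i+1}"
    then have "[:-c, 1:]^2 * P k = (\<Sum>j<i+4. smult (Um beta0 beta1 k j) (Q j))"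
      by (intro P_row_ext[OF P_exp]) auto
    then show "smult (Lm alpha1 alpha2 i k) ([:-c, 1:]^2 * P k) = smult (Lm alpha1 alpha2 i k) (\<Sum>j<i+4. smult (Um beta0 beta1 k j) (Q j))"
      by simp
  qed
  also have "\<dots> = (\<Sum>j<i+4. smult (\<Sum>k<i+1. Lm alpha1 alpha2 i k * Um beta0 beta1 k j) (Q j))"
    by (rule double_sum)
  also have "\<dots> = (\<Sum>j<i+4. smult (imat_mult (Lm alpha1 alpha2) (Um beta0 beta1) i j) (Q j))"
  proof (rule sum.cong[OF refl])
    fix j
    have "imat_mult (Lm alpha1 alpha2) (Um beta0 beta1) i j = (\<Sum>k<i+1. Lm alpha1 alpha2 i k * Um beta0 beta1 k j)"
      by (rule imat_mult_S) (auto simp: Lm_def)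
    then show "smult (\<Sum>k<i+1. Lm alpha1 alpha2 i k * Um beta0 beta1 k j) (Q j) = smult (imat_mult (Lm alpha1 alpha2) (Um beta0 beta1) i j) (Q j)" by simp
  qed
  finally show ?thesis .
qed

lemma LU_far:
  assumes "i + 4 \<le> j"
  shows "imat_mult (Lm alpha1 alpha2) (Um beta0 beta1) i j = 0"
proof -
  have "imat_mult (Lm alpha1 alpha2) (Um beta0 beta1) i j = (\<Sum>k<i+1. Lm alpha1 alpha2 i k * Um beta0 beta1 k j)"
    by (rule imat_mult_S) (auto simp: Lm_def)
  also have "\<dots> = 0" using assms by (intro sum.neutral) (auto simp: Um_def)
  finally show ?thesis .
qed

lemma matrix_eq:
  assumes "lin_functional u" "is_SMOP u P"
    and "\<And>i. X * P i = (\<Sum>j<i+4. smult (A i j) (P j))"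
    and "\<And>i. X * P i = (\<Sum>j<i+4. smult (B i j) (P j))"
    and "\<And>i j. i + 4 \<le> j \<Longrightarrow> A i j = 0"
    and "\<And>i j. i + 4 \<le> j \<Longrightarrow> B i j = 0"
  shows "A = B"
proof (intro ext)
  fix i j
  show "A i j = B i j"
  proof (cases "j < i + 4")
    case True
    show ?thesis by (rule smop_unique[OF assms(1,2) True]) (metis assms(3,4))
  next
    case False then show ?thesis using assms(5,6) by simp
  qed
qed

lemma alg_dep:
  fixes x1 x2 y1 y2 :: complex
  assumes "x1 * y2 - y1 * x2 = 0"
  shows "\<exists>s t. (s \<noteq> 0 \<or> t \<noteq> 0) \<and> s * x1 + t * x2 = 0 \<and> s * y1 + t * y2 = 0"
proof (cases "x1 \<noteq> 0 \<or> x2 \<noteq> 0")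
  case True
  then show ?thesis using assms by (intro exI[of _ x2] exI[of _ "-x1"]) (auto simp: algebra_simps)
next
  case False
  show ?thesis
  proof (cases "y1 \<noteq> 0 \<or> y2 \<noteq> 0")
    case True
    then show ?thesis using False by (intro exI[of _ y2] exI[of _ "-y1"]) (auto simp: algebra_simps)
  next
    case F2: False
    then show ?thesis using False by (intro exI[of _ 1] exI[of _ 0]) auto
  qed
qed

lemma double_root_dvd:
  fixes R :: "complex poly"
  assumes "poly R c = 0" "poly (pderiv R) c = 0"
  shows "[:-c, 1:]^2 dvd R"
proof -
  obtain R1 where R1: "R = [:-c, 1:] * R1" using assms(1) poly_eq_0_iff_dvd by (metis dvdE)
  have d1: "pderiv [:-c, 1:] = (1::complex poly)" by (simp add: pderiv_pCons)
  have "pderiv R = R1 + [:-c, 1:] * pderiv R1"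
    unfolding R1 by (simp only: pderiv_mult d1 mult_1_right add.commute)
  then have "poly R1 c = 0" using assms(2) by simp
  then obtain R2 where "R1 = [:-c, 1:] * R2" using poly_eq_0_iff_dvd by (metis dvdE)
  then have "R = [:-c, 1:]^2 * R2" using R1 by (simp only: power2_eq_square mult.assoc)
  then show ?thesis by simp
qed

lemma deg_X2: "degree ([:-c, 1:]^2 :: complex poly) = 2"
  by (simp add: degree_power_eq)

lemma W_nonzero:
  assumes lu: "lin_functional u" and luh: "lin_functional uh"
    and u_eq: "u = mult_sq c uh"
    and P_smop: "is_SMOP u P" and Q_smop: "is_SMOP uh Q"
  shows "wronskian (Q (n + 1)) (Q n) c \<noteq> 0"
proof
  assume W0: "wronskian (Q (n + 1)) (Q n) c = 0"
  obtain s t where st: "s \<noteq> 0 \<or> t \<noteq> 0"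
    "s * poly (Q (n+1)) c + t * poly (Q n) c = 0"
    "s * poly (pderiv (Q (n+1))) c + t * poly (pderiv (Q n)) c = 0"
    using alg_dep[of "poly (Q (n+1)) c" "poly (pderiv (Q n)) c" "poly (pderiv (Q (n+1))) c" "poly (Q n) c"]
      W0 unfolding wronskian_def by auto
  define R where "R = smult s (Q (n+1)) + smult t (Q n)"
  have "poly R c = 0" "poly (pderiv R) c = 0" using st by (auto simp: R_def pderiv_add pderiv_smult)
  then have "[:-c, 1:]^2 dvd R" by (rule double_root_dvd)
  then obtain r where r: "R = [:-c, 1:]^2 * r" by (auto elim: dvdE)
  have dQ: "degree (Q m) = m" "coeff (Q m) m = 1" for m
    using smop_deg[OF Q_smop] smop_lc[OF Q_smop] by auto
  have cR: "coeff R (n+1) = s" using dQ[of n] dQ[of "n+1"] by (simp add: R_def coeff_eq_0)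
  have "R \<noteq> 0"
  proof (cases "s = 0")
    case True
    then have "t \<noteq> 0" using st by auto
    moreover have "Q n \<noteq> 0" using dQ[of n] by auto
    ultimately show ?thesis using True by (simp add: R_def)
  next
    case False then show ?thesis using cR by auto
  qed
  then have rnz: "r \<noteq> 0" using r by auto
  have "degree R \<le> n + 1" unfolding R_def using dQ
    by (metis degree_add_le degree_smult_le le_SucI le_trans add.commute plus_1_eq_Suc le_refl)
  moreover have "degree R = 2 + degree r" using r rnz deg_X2[of c]
    by (simp add: degree_mult_eq)
  ultimately have dr: "degree r < n" by simp
  define d where "d = degree r"
  have dP: "degree (P d) = d" using smop_deg[OF P_smop] by auto
  have "u (r * P d) = uh ([:-c, 1:]^2 * (r * P d))" using u_eq by (simp add: mult_sq_def)
  also have "\<dots> = uh (R * P d)" using r by (simp add: mult.assoc)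
  also have "\<dots> = s * uh (Q (n+1) * P d) + t * uh (Q n * P d)"
    unfolding R_def by (simp add: distrib_right lin_add[OF luh] lin_smult[OF luh])
  also have "\<dots> = 0"
    using smop_orth[OF luh Q_smop, of "P d" "n+1"] smop_orth[OF luh Q_smop, of "P d" n] dP dr d_def by simp
  finally have "u (r * P (degree r)) = 0" by (simp add: d_def)
  then show False using smop_zero[OF lu P_smop rnz] by blast
qed

lemma X2_root:
  fixes p :: "complex poly"
  shows "poly ([:-c, 1:]^2 * p) c = 0" "poly (pderiv ([:-c, 1:]^2 * p)) c = 0"
proof -
  have d1: "pderiv [:-c, 1:] = (1::complex poly)" by (simp add: pderiv_pCons)
  show "poly ([:-c, 1:]^2 * p) c = 0" by simp
  show "poly (pderiv ([:-c, 1:]^2 * p)) c = 0"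
    by (simp only: power2_eq_square pderiv_mult d1 poly_mult poly_add mult_1_right) simp
qed

lemma cramer:
  fixes x1 x2 y1 y2 z w b0 b1 :: complex
  assumes "x1 * y2 - y1 * x2 \<noteq> 0"
    and "z + b1 * x1 + b0 * x2 = 0" and "w + b1 * y1 + b0 * y2 = 0"
  shows "b0 = (x1 * w - y1 * z) / (x2 * y1 - y2 * x1)"
    and "b1 = - ((x2 * w - y2 * z) / (x2 * y1 - y2 * x1))"
proof -
  have d: "x2 * y1 - y2 * x1 \<noteq> 0" using assms(1) by (simp add: algebra_simps)
  have z: "z = - b1 * x1 - b0 * x2" and w: "w = - b1 * y1 - b0 * y2" using assms(2,3) by (simp_all add: algebra_simps eq_neg_iff_add_eq_0)
  show "b0 = (x1 * w - y1 * z) / (x2 * y1 - y2 * x1)"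
    using d unfolding z w by (simp add: field_simps; simp add: algebra_simps)
  show "b1 = - ((x2 * w - y2 * z) / (x2 * y1 - y2 * x1))"
    using d unfolding z w by (simp add: field_simps; simp add: algebra_simps)
qed



theorem mainTheorem5:
  fixes c :: complex
    and u uh :: "complex poly \<Rightarrow> complex"
    and P Q :: "nat \<Rightarrow> complex poly"
    and a b ah bh :: "nat \<Rightarrow> complex"
    and alpha1 alpha2 beta0 beta1 :: "nat \<Rightarrow> complex"
  assumes qd_u: "quasi_definite u"
    and qd_uh: "quasi_definite uh"
    and u_eq: "u = mult_sq c uh"
    and P_smop: "is_SMOP u P"
    and Q_smop: "is_SMOP uh Q"
    and P_rec: "three_term P a b"
    and Q_rec: "three_term Q ah bh"
    and Q_exp: "\<forall>n\<ge>1. Q n = P n + smult (alpha1 n) (P (n - 1))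
                      + (if n \<ge> 2 then smult (alpha2 n) (P (n - 2)) else 0)"
    and P_exp: "\<forall>n. [:-c, 1:]^2 * P n = Q (n + 2) + smult (beta1 n) (Q (n + 1)) + smult (beta0 n) (Q n)"
  defines "L \<equiv> (\<lambda>i j. if j = i then 1 else if Suc j = i then alpha1 i
                   else if j + 2 = i then alpha2 i else 0)"
    and "U \<equiv> (\<lambda>i j. if j = i then beta0 i else if j = Suc i then beta1 i
                   else if j = i + 2 then 1 else 0)"
    and "Jc \<equiv> imat_minus (monic_jacobi a b) (imat_smult c imat_id)"
    and "Jhc \<equiv> imat_minus (monic_jacobi ah bh) (imat_smult c imat_id)"
  shows "(\<forall>n. wronskian (Q (n + 1)) (Q n) c \<noteq> 0)
    \<and> (\<forall>n. beta0 n = wronskian (Q (n + 1)) (Q (n + 2)) c / wronskian (Q n) (Q (n + 1)) c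
           \<and> beta0 n \<noteq> 0)
    \<and> (\<forall>n. beta1 n = - (wronskian (Q n) (Q (n + 2)) c / wronskian (Q n) (Q (n + 1)) c))
    \<and> imat_mult Jc Jc = imat_mult U L
    \<and> imat_mult Jhc Jhc = imat_mult L U"
proof -
  have lu: "lin_functional u" and luh: "lin_functional uh"
    using qd_u qd_uh unfolding quasi_definite_def by auto
  have Q0: "Q 0 = P 0" using smop_P0[OF P_smop] smop_P0[OF Q_smop] by simp
  have W: "\<And>n. wronskian (Q (n + 1)) (Q n) c \<noteq> 0"
    by (rule W_nonzero[OF lu luh u_eq P_smop Q_smop])
  have B: "beta0 n = wronskian (Q (n + 1)) (Q (n + 2)) c / wronskian (Q n) (Q (n + 1)) c
     \<and> beta1 n = - (wronskian (Q n) (Q (n + 2)) c / wronskian (Q n) (Q (n + 1)) c)" for n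
  proof -
    have e: "[:-c, 1:]^2 * P n = Q (n + 2) + smult (beta1 n) (Q (n + 1)) + smult (beta0 n) (Q n)"
      using P_exp by auto
    have e1: "poly (Q (n+2)) c + beta1 n * poly (Q (n+1)) c + beta0 n * poly (Q n) c = 0"
      using X2_root(1)[of c "P n"] unfolding e by simp
    have e2: "poly (pderiv (Q (n+2))) c + beta1 n * poly (pderiv (Q (n+1))) c + beta0 n * poly (pderiv (Q n)) c = 0"
      using X2_root(2)[of c "P n"] unfolding e by (simp add: pderiv_add pderiv_smult)
    have d: "poly (Q (n+1)) c * poly (pderiv (Q n)) c - poly (pderiv (Q (n+1))) c * poly (Q n) c \<noteq> 0"
      using W[of n] unfolding wronskian_def .
    show ?thesis using cramer[OF d e1 e2] unfolding wronskian_def by simp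
  qed
  have B0: "beta0 n \<noteq> 0" for n
  proof -
    have "wronskian (Q (n + 1)) (Q (n + 2)) c \<noteq> 0"
      using W[of "n+1"] unfolding wronskian_def by (auto simp: algebra_simps)
    moreover have "wronskian (Q n) (Q (n + 1)) c \<noteq> 0"
      using W[of n] unfolding wronskian_def by (auto simp: algebra_simps)
    ultimately show ?thesis using B[of n] by simp
  qed
  have LL: "L = Lm alpha1 alpha2" unfolding L_def Lm_def by simp
  have UU: "U = Um beta0 beta1" unfolding U_def Um_def by simp
  have JJ: "Jc = Jm a b c" "Jhc = Jm ah bh c" unfolding Jc_def Jhc_def Jm_def by simp_all
  have M1: "imat_mult Jc Jc = imat_mult U L"
    unfolding JJ LL UU
    by (rule matrix_eq[OF lu P_smop, of "[:-c, 1:]^2"])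
       (auto intro: jac_sq[OF P_rec] UL_row[OF Q_exp Q0 P_exp] jac_sq_far UL_far)
  have M2: "imat_mult Jhc Jhc = imat_mult L U"
    unfolding JJ LL UU
    by (rule matrix_eq[OF luh Q_smop, of "[:-c, 1:]^2"])
       (auto intro: jac_sq[OF Q_rec] LU_row[OF Q_exp Q0 P_exp] jac_sq_far LU_far)
  show ?thesis using W B B0 M1 M2 by blast
qed

end
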